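(* Let $q$ be an odd prime power, $\lambda$ a divisor of $q+1$ with $2\le\lambda<q+1$, $m=2t+1\ge5$, and $n=\frac{q^m+1}{\lambda}$. If $t$ is even, the smallest positive integer $i$ with $i\not\equiv0\pmod q$ that is not a coset leader modulo $n$ is $\frac{q^{t+1}+1}{\lambda}-\lfloor\frac q\lambda\rfloor$. If $t$ is odd, the smallest such $i$ is $\frac{q^{t+1}-1}{\lambda}-\lfloor\frac{q-2}{\lambda}\rfloor$.
   Context: For $0\le s\le n-1$, $C_s=\{sq^i\bmod n:i\ge0\}$ is the $q$-cyclotomic coset of $s$ modulo $n$; its least element is its coset leader. *)

theory Defs
  imports "HOL-Computational_Algebra.Primes"
begin

definition cyc_coset :: "nat \<Rightarrow> nat \<Rightarrow> nat \<Rightarrow> nat set" where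
  "cyc_coset q n s = {(s * q ^ i) mod n | i. True}"

definition coset_leader :: "nat \<Rightarrow> nat \<Rightarrow> nat \<Rightarrow> bool" where
  "coset_leader q n s \<longleftrightarrow> s < n \<and> s = Min (cyc_coset q n s)"

definition prime_power :: "nat \<Rightarrow> bool" where
  "prime_power q \<longleftrightarrow> (\<exists>p k. prime p \<and> k \<ge> 1 \<and> q = p ^ k)"

definition is_least_elem :: "nat set \<Rightarrow> nat \<Rightarrow> bool" where
  "is_least_elem S x \<longleftrightarrow> x \<in> S \<and> (\<forall>y\<in>S. x \<le> y)"

end

theory Submission
  imports Defs "HOL-Number_Theory.Cong"
begin

lemma zero_cong_small:
  fixes N x :: nat
  assumes "[x = 0] (mod N)" "0 < x" "x < N" shows False
  using assms by (simp add: cong_0_iff) (meson nat_dvd_not_less)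

lemma key_leader:
  fixes q t a N j :: nat
  assumes q2: "q \<ge> 2" and hN: "N = q^(2*t+1)+1" and a0: "0<a"
    and ab: "a*(q^t+1) < N" and nd: "\<not> q dvd a"
  shows "a \<le> a*q^j mod N"
proof (rule ccontr)
  define m where "m = 2*t+1"
  assume "\<not> a \<le> a*q^j mod N"
  hence rl: "a*q^j mod N < a" by simp
  define r where "r = a*q^j mod N"
  define j' where "j' = j mod (2*m)"
  have qm1: "[q^m + 1 = 0] (mod N)" using hN m_def by (simp add: cong_0_iff)
  have q2m: "[q^(2*m) = 1] (mod N)"
  proof -
    have "q^m \<ge> 1" using q2 by simp
    then obtain x where x: "q^m = Suc x" by (cases "q^m") auto
    have "q^(2*m) = q^m * q^m" by (simp add: power_add[symmetric] mult_2)
    also have "... = 1 + x * N" using x hN m_def by simp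
    finally have "q^(2*m) = 1 + x*N" .
    moreover have "(1 + x*N) mod N = 1 mod N" by (metis mod_mult_self2 mod_mult_self1 mult.commute)
    ultimately show ?thesis by (simp only: cong_def)
  qed
  have "j = 2*m*(j div (2*m)) + j'" using j'_def by simp
  hence "q^j = (q^(2*m))^(j div (2*m)) * q^j'" by (metis power_add power_mult)
  moreover have "[(q^(2*m))^(j div (2*m)) = 1] (mod N)" using q2m cong_pow by fastforce
  ultimately have "[q^j = q^j'] (mod N)" using cong_scalar_right by fastforce
  hence rc: "[r = a*q^j'] (mod N)" unfolding r_def
    using cong_mod_left cong_scalar_left by blast
  have rlt: "r < a" using rl r_def by simp
  have j'lt: "j' < 2*m" using j'_def m_def by simp
  have qt: "q^t > 0" using q2 by simp
  have "a \<le> a*q^t" using qt by (simp add: Suc_le_eq)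
  have ab': "a + a*q^t < N" using ab by (simp add: algebra_simps)
  hence aN: "a < N" using \<open>a \<le> a*q^t\<close> by linarith
  have "j' \<le> t \<or> (t < j' \<and> j' < m) \<or> (m \<le> j' \<and> j' \<le> m+t) \<or> (m+t < j' \<and> j' < 2*m)"
    using j'lt by linarith
  moreover {
    assume h: "j' \<le> t"
    have "q^j' \<le> q^t" using h q2 by (simp add: power_increasing)
    hence "a*q^j' \<le> a*q^t" by (rule mult_le_mono2)
    hence "a*q^j' < N" using ab' by linarith
    moreover have "r < N" using r_def aN by simp
    ultimately have "r = a*q^j'" using rc cong_less_modulus_unique_nat by blast
    moreover have "a \<le> a*q^j'" using q2 by simp
    ultimately have False using rlt by simp
  }
  moreover {
    assume h: "t < j' \<and> j' < m"
    define k where "k = m - j'"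
    have k1: "1 \<le> k" "k \<le> t" using h k_def m_def by auto
    have "[r*q^k = a*q^j'*q^k] (mod N)" using rc by (rule cong_scalar_right)
    moreover have "a*q^j'*q^k = a*q^m" using h k_def by (simp add: power_add[symmetric] mult.assoc)
    ultimately have "[r*q^k + a = a*(q^m+1)] (mod N)"
      by (metis cong_add_rcancel_nat distrib_left mult_numeral_1_right numerals(1))
    moreover have "[a*(q^m+1) = 0] (mod N)" using qm1 by (metis cong_scalar_left mult_is_0)
    ultimately have c0: "[r*q^k + a = 0] (mod N)" by (rule cong_trans)
    have "q^k \<le> q^t" using k1 q2 by (simp add: power_increasing)
    hence "r*q^k \<le> r*q^t" by (rule mult_le_mono2)
    also have "... < a*q^t" using rlt qt by simp
    finally have l: "r*q^k + a < N" using ab' by linarith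
    have p: "0 < r*q^k + a" using a0 by simp
    have False by (rule zero_cong_small[OF c0 p l])
  }
  moreover {
    assume h: "m \<le> j' \<and> j' \<le> m+t"
    define e where "e = j' - m"
    have e1: "e \<le> t" "j' = m + e" using h e_def by auto
    have "a*q^j' = a*q^e*q^m" using e1 by (simp add: power_add)
    hence "[r + a*q^e = a*q^e*(q^m+1)] (mod N)" using rc
      by (metis cong_add_rcancel_nat distrib_left mult_numeral_1_right numerals(1))
    moreover have "[a*q^e*(q^m+1) = 0] (mod N)" using qm1 by (metis cong_scalar_left mult_is_0)
    ultimately have c0: "[r + a*q^e = 0] (mod N)" by (rule cong_trans)
    have "q^e \<le> q^t" using e1 q2 by (simp add: power_increasing)
    hence "a*q^e \<le> a*q^t" by (rule mult_le_mono2)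
    hence l: "r + a*q^e < N" using ab' rlt by linarith
    have p: "0 < r + a*q^e" using a0 q2 by simp
    have False by (rule zero_cong_small[OF c0 p l])
  }
  moreover {
    assume h: "m+t < j' \<and> j' < 2*m"
    define k where "k = 2*m - j'"
    have k1: "1 \<le> k" "k \<le> t" using h k_def m_def by auto
    have "[r*q^k = a*q^j'*q^k] (mod N)" using rc by (rule cong_scalar_right)
    moreover have "a*q^j'*q^k = a*q^(2*m)" using h k_def by (simp add: power_add[symmetric] mult.assoc)
    moreover have "[a*q^(2*m) = a] (mod N)" using q2m cong_scalar_left by fastforce
    ultimately have c: "[r*q^k = a] (mod N)" using cong_trans by metis
    have "q^k \<le> q^t" using k1 q2 by (simp add: power_increasing)
    hence "r*q^k \<le> r*q^t" by (rule mult_le_mono2)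
    also have "... < a*q^t" using rlt qt by simp
    finally have "r*q^k < N" using ab' by linarith
    hence "r*q^k = a" using c aN cong_less_modulus_unique_nat by blast
    moreover have "q dvd q^k" using k1 by (simp add: dvd_power)
    ultimately have False using nd by (metis dvd_mult)
  }
  ultimately show False by blast
qed

lemma key_nonleader:
  fixes q t a N :: nat
  assumes q2: "q \<ge> 2" and hN: "N = q^(2*t+1)+1"
    and ab1: "a*q^t < N" and ab2: "N < a*(q^t+1)"
  shows "a*q^(2*t+1+t) mod N < a"
proof -
  define m where "m = 2*t+1"
  define r where "r = a*q^(m+t) mod N"
  have qm1: "[q^m + 1 = 0] (mod N)" using hN m_def by (simp add: cong_0_iff)
  have N0: "0 < N" using hN by simp
  have "[r = a*q^(m+t)] (mod N)" unfolding r_def by (simp add: cong_def)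
  moreover have "a*q^(m+t) = a*q^t*q^m" by (simp add: power_add)
  ultimately have "[r + a*q^t = a*q^t*(q^m+1)] (mod N)"
    by (metis cong_add_rcancel_nat distrib_left mult_numeral_1_right numerals(1))
  moreover have "[a*q^t*(q^m+1) = 0] (mod N)" using qm1 by (metis cong_scalar_left mult_is_0)
  ultimately have c0: "[r + a*q^t = 0] (mod N)" by (rule cong_trans)
  hence d: "N dvd r + a*q^t" by (simp add: cong_0_iff)
  have "r < N" using r_def N0 by simp
  hence l2: "r + a*q^t < N*2" using ab1 by simp
  have a0: "a > 0" using ab2 by (cases a) auto
  hence l0: "0 < r + a*q^t" using q2 by simp
  from d obtain c where c: "r + a*q^t = N*c" by (auto simp: dvd_def)
  have "c < 2" using l2 c by (metis mult_less_cancel1)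
  moreover have "c > 0" using l0 c by (cases c) auto
  ultimately have "c = 1" by simp
  hence "r + a*q^t = N" using c by simp
  hence "r < a" using ab2 by (simp add: algebra_simps)
  thus ?thesis using r_def m_def by simp
qed

lemma coset_finite: "0 < n \<Longrightarrow> finite (cyc_coset q n s)"
  by (rule finite_subset[of _ "{..<n}"]) (auto simp: cyc_coset_def)

lemma leader_of:
  fixes q t lam n i :: nat
  assumes q2: "q \<ge> 2" and hn: "lam*n = q^(2*t+1)+1" and i0: "0<i" and "i<n"
    and ab: "(lam*i)*(q^t+1) < lam*n" and nd: "\<not> q dvd (lam*i)"
  shows "coset_leader q n i"
proof -
  have l0: "lam > 0" using hn by (cases lam) auto
  have n0: "n > 0" using \<open>i<n\<close> by simp
  have ge: "i \<le> x" if xin: "x \<in> cyc_coset q n i" for x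
  proof -
    obtain j where x: "x = i*q^j mod n" using xin unfolding cyc_coset_def by blast
    have p: "0 < lam*i" using i0 l0 by simp
    have "lam*i \<le> (lam*i)*q^j mod (lam*n)" by (rule key_leader[OF q2 hn p ab nd])
    also have "... = lam * x" using x by (simp add: mult.assoc mod_mult_mult1)
    finally show ?thesis using l0 by simp
  qed
  have mem: "i \<in> cyc_coset q n i" unfolding cyc_coset_def
    using \<open>i<n\<close> by (auto intro!: exI[of _ 0])
  have "Min (cyc_coset q n i) = i"
    by (rule Min_eqI[OF coset_finite[OF n0]]) (use ge mem in auto)
  thus ?thesis unfolding coset_leader_def using \<open>i<n\<close> by simp
qed

lemma nonleader_of:
  fixes q t lam n i :: nat
  assumes q2: "q \<ge> 2" and hn: "lam*n = q^(2*t+1)+1"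
    and ab1: "(lam*i)*q^t < lam*n" and ab2: "lam*n < (lam*i)*(q^t+1)"
  shows "\<not> coset_leader q n i"
proof
  assume L: "coset_leader q n i"
  have l0: "lam > 0" using hn by (cases lam) auto
  have n0: "n > 0" using hn by (cases n) auto
  define x where "x = i*q^(2*t+1+t) mod n"
  have "lam*x = (lam*i)*q^(2*t+1+t) mod (lam*n)" using x_def by (simp add: mult.assoc mod_mult_mult1)
  also have "... < lam*i" by (rule key_nonleader[OF q2 hn ab1 ab2])
  finally have "x < i" using l0 by simp
  moreover have "x \<in> cyc_coset q n i" unfolding cyc_coset_def x_def by blast
  hence "Min (cyc_coset q n i) \<le> x" by (rule Min_le[OF coset_finite[OF n0]])
  ultimately show False using L unfolding coset_leader_def by simp
qed

lemma least_lemma: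
  fixes q t lam n D :: nat
  assumes q3: "q \<ge> 3" and t2: "t \<ge> 2" and cop: "coprime q lam"
    and hn: "lam*n = q^(2*t+1)+1"
    and i1: "q^(t+1) - q + 1 \<le> lam*D" and i2: "lam*D \<le> q^(t+1)"
    and ii: "lam*D - lam \<le> q^(t+1) - q" and iii: "\<not> q dvd lam*D"
  shows "is_least_elem {i. 0 < i \<and> i < n \<and> \<not> q dvd i \<and> \<not> coset_leader q n i} D"
proof -
  have q2: "q \<ge> 2" using q3 by simp
  have l0: "lam > 0" using hn by (cases lam) auto
  define T where "T = q^t"
  have B: "q^(t+1) = q*T" using T_def by simp
  have Nq: "q^(2*t+1) = q*T*T" using T_def by (simp add: power_add mult_2 mult.assoc)
  have "q^2 \<le> q^t" using t2 q2 by (intro power_increasing) auto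
  hence Tq: "T \<ge> q*q" using T_def by (simp add: power2_eq_square)
  have "2*q \<le> q*q" using q2 by (rule mult_le_mono1)
  hence Tq': "T > q" using Tq q2 by linarith
  define W where "W = q*T - q"
  have "q*1 \<le> q*T" using Tq' by (intro mult_le_mono2) simp
  hence W: "W + q = q*T" using W_def by simp
  have WT: "q*T*T = W*T + q*T" using W by (metis add_mult_distrib)
  have hn': "lam*n = W*T + q*T + 1" using hn Nq WT by simp
  have Dn: "D < n"
  proof -
    have "lam*D \<le> q*T" using i2 by (simp only: B)
    hence "lam*D < lam*n" using hn' by linarith
    thus ?thesis using l0 by simp
  qed
  have D0: "0 < D" using i1 by (cases D) auto
  have Dq: "\<not> q dvd D" using iii by auto
  have NL: "\<not> coset_leader q n D"
  proof (rule nonleader_of[OF q2 hn])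
    have "lam*D \<le> q*T" using i2 by (simp only: B)
    hence "lam*D*T \<le> q*T*T" by (rule mult_le_mono1)
    moreover have "lam*n = q*T*T + 1" using hn Nq by simp
    ultimately show "lam*D*q^t < lam*n" unfolding T_def[symmetric] by linarith
    have a1: "W + 1 \<le> lam*D" using i1 unfolding B W_def[symmetric] .
    have "(W+1)*(T+1) = W*T + W + T + 1" by (simp add: algebra_simps)
    moreover have "(W+1)*(T+1) \<le> lam*D*(T+1)" using a1 by (rule mult_le_mono1)
    ultimately show "lam*n < lam*D*(q^t+1)" using hn' W Tq' unfolding T_def[symmetric] by linarith
  qed
  have mem: "D \<in> {i. 0 < i \<and> i < n \<and> \<not> q dvd i \<and> \<not> coset_leader q n i}"
    using D0 Dn Dq NL by simp
  have low: "D \<le> y" if y: "y \<in> {i. 0 < i \<and> i < n \<and> \<not> q dvd i \<and> \<not> coset_leader q n i}" for y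
  proof (rule ccontr)
    assume "\<not> D \<le> y"
    hence "y + 1 \<le> D" by simp
    hence "lam*(y+1) \<le> lam*D" by (rule mult_le_mono2)
    hence "lam*y + lam \<le> lam*D" by (simp add: algebra_simps)
    moreover have "lam*D - lam \<le> W" using ii unfolding B W_def[symmetric] .
    ultimately have ay: "lam*y \<le> W" by linarith
    have "lam*y*(T+1) \<le> W*(T+1)" using ay by (rule mult_le_mono1)
    moreover have "W*(T+1) = W*T + W" by (simp add: algebra_simps)
    ultimately have "lam*y*(q^t+1) < lam*n" using hn' W unfolding T_def[symmetric] by linarith
    moreover have "\<not> q dvd lam*y" using y cop by (simp add: coprime_dvd_mult_right_iff)
    moreover have "0 < y" "y < n" using y by auto
    ultimately have "coset_leader q n y" using leader_of[OF q2 hn] by blast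
    thus False using y by simp
  qed
  show ?thesis unfolding is_least_elem_def using mem low by blast
qed

lemma least_lemma2:
  fixes q t lam n D c :: nat
  assumes q3: "q \<ge> 3" and t2: "t \<ge> 2" and cop: "coprime q lam"
    and hn: "lam*n = q^(2*t+1)+1"
    and e: "lam*D + q = q^(t+1) + c" and c0: "0 < c" and cq: "c < q" and cl: "c \<le> lam"
  shows "is_least_elem {i. 0 < i \<and> i < n \<and> \<not> q dvd i \<and> \<not> coset_leader q n i} D"
proof (rule least_lemma[OF q3 t2 cop hn])
  have qt: "1 \<le> q^t" using q3 by simp
  have B: "q^(t+1) = q*q^t" by simp
  have "q*1 \<le> q*q^t" using qt by (rule mult_le_mono2)
  hence Bq: "q \<le> q^(t+1)" using B by simp
  show "q^(t+1) - q + 1 \<le> lam*D" using e Bq c0 by linarith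
  show "lam*D \<le> q^(t+1)" using e cq by linarith
  show "lam*D - lam \<le> q^(t+1) - q" using e cl Bq by linarith
  have "lam*D = q*(q^t - 1) + c" using e B qt by (simp add: diff_mult_distrib2)
  moreover have "\<not> q dvd c" using c0 cq by (auto dest: dvd_imp_le)
  ultimately show "\<not> q dvd lam*D" by (simp add: dvd_add_right_iff)
qed

lemma dvd_odd_pow:
  fixes q lam k :: nat
  assumes "lam dvd q+1" "odd k" shows "lam dvd q^k+1"
proof -
  have "[int q = -1] (mod int lam)" using assms(1)
    by (simp add: cong_iff_dvd_diff) (metis int_dvd_int_iff of_nat_Suc add.commute)
  hence "[int q ^ k = (-1)^k] (mod int lam)" by (rule cong_pow)
  hence "[int q ^ k = -1] (mod int lam)" using assms(2) by simp
  hence "int lam dvd int q ^ k + 1" by (simp add: cong_iff_dvd_diff)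
  hence "int lam dvd int (q^k+1)" by (simp add: add.commute)
  thus ?thesis by (simp only: int_dvd_int_iff)
qed

lemma dvd_even_pow:
  fixes q lam k :: nat
  assumes "lam dvd q+1" "even k" "q \<ge> 1" shows "lam dvd q^k-1"
proof -
  have "[int q = -1] (mod int lam)" using assms(1)
    by (simp add: cong_iff_dvd_diff) (metis int_dvd_int_iff of_nat_Suc add.commute)
  hence "[int q ^ k = (-1)^k] (mod int lam)" by (rule cong_pow)
  hence "[int q ^ k = 1] (mod int lam)" using assms(2) by simp
  hence "int lam dvd int q ^ k - 1" by (simp add: cong_iff_dvd_diff)
  moreover have "int (q^k - 1) = int q ^ k - 1" using assms(3) by (simp add: of_nat_diff)
  ultimately have "int lam dvd int (q^k-1)" by simp
  thus ?thesis by (simp only: int_dvd_int_iff)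
qed

theorem corollary1:
  fixes q lam m t n :: nat
  assumes "prime_power q" and "odd q"
    and "lam dvd (q + 1)" and "2 \<le> lam" and "lam < q + 1"
    and "m = 2 * t + 1" and "m \<ge> 5"
    and "n = (q ^ m + 1) div lam"
  shows "(even t \<longrightarrow>
           is_least_elem {i. 0 < i \<and> i < n \<and> \<not> q dvd i \<and> \<not> coset_leader q n i}
             ((q ^ (t + 1) + 1) div lam - q div lam))
       \<and> (odd t \<longrightarrow>
           is_least_elem {i. 0 < i \<and> i < n \<and> \<not> q dvd i \<and> \<not> coset_leader q n i}
             ((q ^ (t + 1) - 1) div lam - (q - 2) div lam))"
proof -
  have q2: "q \<ge> 2" using assms(4,5) by simp
  have q3: "q \<ge> 3" using q2 assms(2) by (cases "q = 2") auto
  have t2: "t \<ge> 2" using assms(6,7) by simp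
  obtain Q where Q: "q + 1 = lam*Q" using assms(3) by (auto simp: dvd_def)
  have cop1: "coprime q (lam*Q)" unfolding Q[symmetric] by simp
  hence cop: "coprime q lam" by simp
  have lq: "lam \<noteq> q"
  proof
    assume "lam = q"
    hence "q dvd q+1" using assms(3) by simp
    hence "q dvd 1" using dvd_add_right_iff[of q q 1] by simp
    thus False using q2 by simp
  qed
  hence lq': "lam < q" using assms(5) by simp
  have Q1: "Q \<ge> 1" using Q by (cases Q) auto
  have lQ1: "lam*(Q-1) = q + 1 - lam" using Q by (simp add: diff_mult_distrib2)
  have "odd m" using assms(6) by simp
  hence "lam dvd q^m+1" by (rule dvd_odd_pow[OF assms(3)])
  hence hn: "lam*n = q^(2*t+1)+1" using assms(6,8) by simp
  have qt1: "1 \<le> q^t" using q2 by simp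
  have Bq: "q \<le> q^(t+1)" using qt1 by simp
  show ?thesis
  proof (intro conjI impI)
    assume te: "even t"
    have "odd (t+1)" using te by simp
    hence "lam dvd q^(t+1)+1" by (rule dvd_odd_pow[OF assms(3)])
    then obtain P where P: "q^(t+1)+1 = lam*P" by (auto simp: dvd_def)
    have dP: "(q^(t+1)+1) div lam = P" using P assms(4) by simp
    have dQ: "q div lam = Q - 1"
      by (rule div_nat_eqI) (use lQ1 Q Q1 assms(4) in auto)
    define D where "D = P - (Q - 1)"
    have "lam*D = lam*P - lam*(Q-1)" using D_def by (simp add: diff_mult_distrib2)
    hence e: "lam*D + q = q^(t+1) + lam" using P lQ1 Bq assms(5) by linarith
    show "is_least_elem {i. 0 < i \<and> i < n \<and> \<not> q dvd i \<and> \<not> coset_leader q n i}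
             ((q ^ (t + 1) + 1) div lam - q div lam)"
      unfolding dP dQ D_def[symmetric]
      by (rule least_lemma2[OF q3 t2 cop hn e]) (use assms(4) lq' in auto)
  next
    assume to: "odd t"
    have "even (t+1)" using to by simp
    moreover have "q \<ge> 1" using q2 by simp
    ultimately have "lam dvd q^(t+1)-1" by (rule dvd_even_pow[OF assms(3)])
    then obtain P where P: "q^(t+1)-1 = lam*P" by (auto simp: dvd_def)
    have dP: "(q^(t+1)-1) div lam = P" using P assms(4) by simp
    show "is_least_elem {i. 0 < i \<and> i < n \<and> \<not> q dvd i \<and> \<not> coset_leader q n i}
             ((q ^ (t + 1) - 1) div lam - (q - 2) div lam)"
    proof (cases "lam = 2")
      case True
      have Q2: "Q \<ge> 2" using Q True q3 by simp
      have l2: "lam*(Q-2) = q + 1 - 2*lam" using Q by (simp add: diff_mult_distrib2)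
      have dQ: "(q - 2) div lam = Q - 2"
        by (rule div_nat_eqI) (use l2 Q Q2 True in auto)
      define D where "D = P - (Q - 2)"
      have "lam*D = lam*P - lam*(Q-2)" using D_def by (simp add: diff_mult_distrib2)
      hence e: "lam*D + q = q^(t+1) + 2" using P l2 Bq True q3 by linarith
      show ?thesis
        unfolding dP dQ D_def[symmetric]
        by (rule least_lemma2[OF q3 t2 cop hn e]) (use True q3 in auto)
    next
      case False
      hence l3: "lam \<ge> 3" using assms(4) by simp
      have dQ: "(q - 2) div lam = Q - 1"
        by (rule div_nat_eqI) (use lQ1 Q Q1 l3 in auto)
      define D where "D = P - (Q - 1)"
      have "lam*D = lam*P - lam*(Q-1)" using D_def by (simp add: diff_mult_distrib2)
      hence e: "lam*D + q = q^(t+1) + (lam - 2)" using P lQ1 Bq l3 lq' q3 by linarith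
      show ?thesis
        unfolding dP dQ D_def[symmetric]
        by (rule least_lemma2[OF q3 t2 cop hn e]) (use l3 lq' in auto)
    qed
  qed
qed

end
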